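(* Let $\mathcal{D}$ be a dagger category. (1) $\mathcal{D}$ is maximal if and only if every self-adjoint automorphism is iso-positive. (2) $\mathcal{D}$ is minimal if and only if every iso-positive endomorphism is aut-positive.
   Context: A dagger category is a category with an identity-on-objects functor $\dagger$ to its opposite with $f^{\dagger\dagger}=f$. $f$ is self-adjoint if $f^\dagger=f$; an isomorphism $u$ is unitary if $u^\dagger=u^{-1}$. An endomorphism $f\colon c\to c$ is iso-positive if $f=g^\dagger g$ for some isomorphism $g\colon c\to c'$, aut-positive if $f=g^\dagger g$ for some automorphism $g$ of $c$. $\mathcal{D}$ is minimal if the map from unitary-isomorphism classes of objects to isomorphism classes of objects is bijective. $\mathcal{D}$ is maximal if it is dagger-equivalent to a Hermitian completion $\mathrm{Herm}\,\mathcal{C}$ of an anti-involutive category $(\mathcal{C},d,\eta)$ (where $d\colon\mathcal{C}\to\mathcal{C}^{\mathrm{op}}$, $\eta\colon\mathrm{id}\Rightarrow d^2$ with $d(\eta_c)\circ\eta_{dc}=\mathrm{id}$; $\mathrm{Herm}\,\mathcal{C}$ has objects pairs $(c,h)$ with $h\colon c\to dc$ an isomorphism satisfying $d(h)\circ\eta_c=h$, morphisms all morphisms of $\mathcal{C}$, and dagger $f^\dagger=h_1^{-1}\circ d(f)\circ h_2$). *)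

theory Defs
  imports Main
begin

record ('o, 'm) cat =
  Obj :: "'o set"
  Arr :: "'m set"
  Src :: "'m \<Rightarrow> 'o"
  Tgt :: "'m \<Rightarrow> 'o"
  Idn :: "'o \<Rightarrow> 'm"
  Cmp :: "'m \<Rightarrow> 'm \<Rightarrow> 'm"   (* Cmp C g f = g \<circ> f *)

definition hom :: "('o, 'm) cat \<Rightarrow> 'o \<Rightarrow> 'o \<Rightarrow> 'm set" where
  "hom C a b = {f \<in> Arr C. Src C f = a \<and> Tgt C f = b}"

definition category :: "('o, 'm) cat \<Rightarrow> bool" where
  "category C \<longleftrightarrow>
     (\<forall>f\<in>Arr C. Src C f \<in> Obj C \<and> Tgt C f \<in> Obj C) \<and>
     (\<forall>a\<in>Obj C. Idn C a \<in> hom C a a) \<and>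
     (\<forall>f\<in>Arr C. \<forall>g\<in>Arr C. Tgt C f = Src C g \<longrightarrow>
         Cmp C g f \<in> hom C (Src C f) (Tgt C g)) \<and>
     (\<forall>f\<in>Arr C. Cmp C f (Idn C (Src C f)) = f \<and> Cmp C (Idn C (Tgt C f)) f = f) \<and>
     (\<forall>f\<in>Arr C. \<forall>g\<in>Arr C. \<forall>h\<in>Arr C. Tgt C f = Src C g \<longrightarrow> Tgt C g = Src C h \<longrightarrow>
         Cmp C h (Cmp C g f) = Cmp C (Cmp C h g) f)"

definition op :: "('o, 'm) cat \<Rightarrow> ('o, 'm) cat" where
  "op C = C\<lparr>Src := Tgt C, Tgt := Src C, Cmp := (\<lambda>g f. Cmp C f g)\<rparr>"

definition is_inverse :: "('o, 'm) cat \<Rightarrow> 'm \<Rightarrow> 'm \<Rightarrow> bool" where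
  "is_inverse C f g \<longleftrightarrow> g \<in> hom C (Tgt C f) (Src C f) \<and>
     Cmp C g f = Idn C (Src C f) \<and> Cmp C f g = Idn C (Tgt C f)"

definition iso :: "('o, 'm) cat \<Rightarrow> 'm \<Rightarrow> bool" where
  "iso C f \<longleftrightarrow> f \<in> Arr C \<and> (\<exists>g. is_inverse C f g)"

definition inv_arr :: "('o, 'm) cat \<Rightarrow> 'm \<Rightarrow> 'm" where
  "inv_arr C f = (SOME g. is_inverse C f g)"

definition automorphism :: "('o, 'm) cat \<Rightarrow> 'm \<Rightarrow> bool" where
  "automorphism C f \<longleftrightarrow> iso C f \<and> Src C f = Tgt C f"

definition isomorphic_rel :: "('o, 'm) cat \<Rightarrow> ('o \<times> 'o) set" where
  "isomorphic_rel C = {(a, b). a \<in> Obj C \<and> b \<in> Obj C \<and> (\<exists>f\<in>hom C a b. iso C f)}"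

definition is_functor :: "('o, 'm) cat \<Rightarrow> ('p, 'n) cat \<Rightarrow> ('o \<Rightarrow> 'p) \<Rightarrow> ('m \<Rightarrow> 'n) \<Rightarrow> bool" where
  "is_functor C D Fo Fm \<longleftrightarrow> category C \<and> category D \<and>
     (\<forall>a\<in>Obj C. Fo a \<in> Obj D) \<and>
     (\<forall>f\<in>Arr C. Fm f \<in> hom D (Fo (Src C f)) (Fo (Tgt C f))) \<and>
     (\<forall>a\<in>Obj C. Fm (Idn C a) = Idn D (Fo a)) \<and>
     (\<forall>f\<in>Arr C. \<forall>g\<in>Arr C. Tgt C f = Src C g \<longrightarrow> Fm (Cmp C g f) = Cmp D (Fm g) (Fm f))"

definition nat_trans ::
  "('o, 'm) cat \<Rightarrow> ('p, 'n) cat \<Rightarrow> ('o \<Rightarrow> 'p) \<Rightarrow> ('m \<Rightarrow> 'n) \<Rightarrow> ('o \<Rightarrow> 'p) \<Rightarrow> ('m \<Rightarrow> 'n)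
     \<Rightarrow> ('o \<Rightarrow> 'n) \<Rightarrow> bool" where
  "nat_trans C D Fo Fm Go Gm \<alpha> \<longleftrightarrow> is_functor C D Fo Fm \<and> is_functor C D Go Gm \<and>
     (\<forall>a\<in>Obj C. \<alpha> a \<in> hom D (Fo a) (Go a)) \<and>
     (\<forall>f\<in>Arr C. Cmp D (\<alpha> (Tgt C f)) (Fm f) = Cmp D (Gm f) (\<alpha> (Src C f)))"

definition dagger_cat :: "('o, 'm) cat \<Rightarrow> ('m \<Rightarrow> 'm) \<Rightarrow> bool" where
  "dagger_cat D dag \<longleftrightarrow> is_functor D (op D) id dag \<and> (\<forall>f\<in>Arr D. dag (dag f) = f)"

definition self_adjoint :: "('o, 'm) cat \<Rightarrow> ('m \<Rightarrow> 'm) \<Rightarrow> 'm \<Rightarrow> bool" where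
  "self_adjoint D dag f \<longleftrightarrow> f \<in> Arr D \<and> dag f = f"

definition unitary :: "('o, 'm) cat \<Rightarrow> ('m \<Rightarrow> 'm) \<Rightarrow> 'm \<Rightarrow> bool" where
  "unitary D dag u \<longleftrightarrow> iso D u \<and> dag u = inv_arr D u"

definition iso_positive :: "('o, 'm) cat \<Rightarrow> ('m \<Rightarrow> 'm) \<Rightarrow> 'm \<Rightarrow> bool" where
  "iso_positive D dag f \<longleftrightarrow> f \<in> Arr D \<and> Src D f = Tgt D f \<and>
     (\<exists>g. iso D g \<and> Src D g = Src D f \<and> f = Cmp D (dag g) g)"

definition aut_positive :: "('o, 'm) cat \<Rightarrow> ('m \<Rightarrow> 'm) \<Rightarrow> 'm \<Rightarrow> bool" where
  "aut_positive D dag f \<longleftrightarrow> f \<in> Arr D \<and> Src D f = Tgt D f \<and>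
     (\<exists>g. automorphism D g \<and> Src D g = Src D f \<and> f = Cmp D (dag g) g)"

definition unitary_rel :: "('o, 'm) cat \<Rightarrow> ('m \<Rightarrow> 'm) \<Rightarrow> ('o \<times> 'o) set" where
  "unitary_rel D dag = {(a, b). a \<in> Obj D \<and> b \<in> Obj D \<and> (\<exists>u\<in>hom D a b. unitary D dag u)}"

definition minimal :: "('o, 'm) cat \<Rightarrow> ('m \<Rightarrow> 'm) \<Rightarrow> bool" where
  "minimal D dag \<longleftrightarrow>
     bij_betw (\<lambda>X. isomorphic_rel D `` X) (Obj D // unitary_rel D dag) (Obj D // isomorphic_rel D)"

definition dagger_functor ::
  "('o, 'm) cat \<Rightarrow> ('m \<Rightarrow> 'm) \<Rightarrow> ('p, 'n) cat \<Rightarrow> ('n \<Rightarrow> 'n) \<Rightarrow> ('o \<Rightarrow> 'p) \<Rightarrow> ('m \<Rightarrow> 'n) \<Rightarrow> bool" where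
  "dagger_functor D dD E dE Fo Fm \<longleftrightarrow> is_functor D E Fo Fm \<and> (\<forall>f\<in>Arr D. Fm (dD f) = dE (Fm f))"

definition dagger_equivalent ::
  "('o, 'm) cat \<Rightarrow> ('m \<Rightarrow> 'm) \<Rightarrow> ('p, 'n) cat \<Rightarrow> ('n \<Rightarrow> 'n) \<Rightarrow> bool" where
  "dagger_equivalent D dD E dE \<longleftrightarrow>
     (\<exists>Fo Fm Go Gm \<eta> \<epsilon>.
        dagger_functor D dD E dE Fo Fm \<and> dagger_functor E dE D dD Go Gm \<and>
        nat_trans D D id id (Go \<circ> Fo) (Gm \<circ> Fm) \<eta> \<and> (\<forall>a\<in>Obj D. unitary D dD (\<eta> a)) \<and>
        nat_trans E E (Fo \<circ> Go) (Fm \<circ> Gm) id id \<epsilon> \<and> (\<forall>b\<in>Obj E. unitary E dE (\<epsilon> b)))"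

definition anti_involutive ::
  "('o, 'm) cat \<Rightarrow> ('o \<Rightarrow> 'o) \<Rightarrow> ('m \<Rightarrow> 'm) \<Rightarrow> ('o \<Rightarrow> 'm) \<Rightarrow> bool" where
  "anti_involutive C do dm \<eta> \<longleftrightarrow> category C \<and> is_functor C (op C) do dm \<and>
     nat_trans C C id id (do \<circ> do) (dm \<circ> dm) \<eta> \<and>
     (\<forall>c\<in>Obj C. Cmp C (dm (\<eta> c)) (\<eta> (do c)) = Idn C (do c))"

definition herm_obj :: "('o, 'm) cat \<Rightarrow> ('o \<Rightarrow> 'o) \<Rightarrow> ('m \<Rightarrow> 'm) \<Rightarrow> ('o \<Rightarrow> 'm) \<Rightarrow> ('o \<times> 'm) set" where
  "herm_obj C do dm \<eta> = {(c, h). c \<in> Obj C \<and> h \<in> hom C c (do c) \<and> iso C h \<and> Cmp C (dm h) (\<eta> c) = h}"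

definition Herm :: "('o, 'm) cat \<Rightarrow> ('o \<Rightarrow> 'o) \<Rightarrow> ('m \<Rightarrow> 'm) \<Rightarrow> ('o \<Rightarrow> 'm)
    \<Rightarrow> ('o \<times> 'm, ('o \<times> 'm) \<times> 'm \<times> ('o \<times> 'm)) cat" where
  "Herm C do dm \<eta> =
     \<lparr> Obj = herm_obj C do dm \<eta>,
       Arr = {(x, f, y). x \<in> herm_obj C do dm \<eta> \<and> y \<in> herm_obj C do dm \<eta> \<and> f \<in> hom C (fst x) (fst y)},
       Src = (\<lambda>(x, f, y). x),
       Tgt = (\<lambda>(x, f, y). y),
       Idn = (\<lambda>x. (x, Idn C (fst x), x)),
       Cmp = (\<lambda>(y, g, z) (x, f, y'). (x, Cmp C g f, z)) \<rparr>"

definition herm_dag :: "('o, 'm) cat \<Rightarrow> ('m \<Rightarrow> 'm)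
    \<Rightarrow> ('o \<times> 'm) \<times> 'm \<times> ('o \<times> 'm) \<Rightarrow> ('o \<times> 'm) \<times> 'm \<times> ('o \<times> 'm)" where
  "herm_dag C dm = (\<lambda>(x, f, y). (y, Cmp C (inv_arr C (snd x)) (Cmp C (dm f) (snd y)), x))"

definition herm_model ::
  "('p, 'n) cat \<Rightarrow> ('n \<Rightarrow> 'n) \<Rightarrow> ('o, 'm) cat \<Rightarrow> ('o \<Rightarrow> 'o) \<Rightarrow> ('m \<Rightarrow> 'm) \<Rightarrow> ('o \<Rightarrow> 'm) \<Rightarrow> bool" where
  "herm_model D dag C do dm \<eta> \<longleftrightarrow> anti_involutive C do dm \<eta> \<and>
     dagger_equivalent D dag (Herm C do dm \<eta>) (herm_dag C dm)"

end

theory Submission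
  imports Defs
begin

lemma op_simps[simp]: "Obj (op C) = Obj C" "Arr (op C) = Arr C" "Src (op C) = Tgt C"
  "Tgt (op C) = Src C" "Idn (op C) = Idn C" "Cmp (op C) g f = Cmp C f g"
  by (simp_all add: op_def)

lemma hom_iff: "f \<in> hom C a b \<longleftrightarrow> f \<in> Arr C \<and> Src C f = a \<and> Tgt C f = b"
  by (simp add: hom_def)

lemma cat_src[simp]: "category C \<Longrightarrow> f \<in> Arr C \<Longrightarrow> Src C f \<in> Obj C"
  and cat_tgt[simp]: "category C \<Longrightarrow> f \<in> Arr C \<Longrightarrow> Tgt C f \<in> Obj C"
  unfolding category_def by blast+

lemma cat_idn[simp]: "category C \<Longrightarrow> a \<in> Obj C \<Longrightarrow> Idn C a \<in> Arr C"
  and cat_idn_src[simp]: "category C \<Longrightarrow> a \<in> Obj C \<Longrightarrow> Src C (Idn C a) = a"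
  and cat_idn_tgt[simp]: "category C \<Longrightarrow> a \<in> Obj C \<Longrightarrow> Tgt C (Idn C a) = a"
  unfolding category_def hom_def by blast+

lemma cat_cmp[simp]: "category C \<Longrightarrow> f \<in> Arr C \<Longrightarrow> g \<in> Arr C \<Longrightarrow> Tgt C f = Src C g \<Longrightarrow> Cmp C g f \<in> Arr C"
  and cat_cmp_src[simp]: "category C \<Longrightarrow> f \<in> Arr C \<Longrightarrow> g \<in> Arr C \<Longrightarrow> Tgt C f = Src C g \<Longrightarrow> Src C (Cmp C g f) = Src C f"
  and cat_cmp_tgt[simp]: "category C \<Longrightarrow> f \<in> Arr C \<Longrightarrow> g \<in> Arr C \<Longrightarrow> Tgt C f = Src C g \<Longrightarrow> Tgt C (Cmp C g f) = Tgt C g"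
  unfolding category_def hom_def by blast+

lemma cat_idl[simp]: "category C \<Longrightarrow> f \<in> Arr C \<Longrightarrow> Tgt C f = b \<Longrightarrow> Cmp C (Idn C b) f = f"
  and cat_idr[simp]: "category C \<Longrightarrow> f \<in> Arr C \<Longrightarrow> Src C f = a \<Longrightarrow> Cmp C f (Idn C a) = f"
  unfolding category_def by blast+

lemma cat_assoc[simp]: "category C \<Longrightarrow> f \<in> Arr C \<Longrightarrow> g \<in> Arr C \<Longrightarrow> h \<in> Arr C \<Longrightarrow>
   Tgt C f = Src C g \<Longrightarrow> Tgt C g = Src C h \<Longrightarrow> Cmp C (Cmp C h g) f = Cmp C h (Cmp C g f)"
proof -
  assume c: "category C" and f: "f \<in> Arr C" and g: "g \<in> Arr C" and h: "h \<in> Arr C"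
    and t1: "Tgt C f = Src C g" and t2: "Tgt C g = Src C h"
  have A: "\<forall>f\<in>Arr C. \<forall>g\<in>Arr C. \<forall>h\<in>Arr C. Tgt C f = Src C g \<longrightarrow> Tgt C g = Src C h \<longrightarrow>
         Cmp C h (Cmp C g f) = Cmp C (Cmp C h g) f"
    using c unfolding category_def by (elim conjE) assumption
  show ?thesis using A[rule_format, OF f g h t1 t2] by (rule sym)
qed

lemma is_inverseD: "is_inverse C f g \<Longrightarrow> g \<in> Arr C \<and> Src C g = Tgt C f \<and> Tgt C g = Src C f \<and>
   Cmp C g f = Idn C (Src C f) \<and> Cmp C f g = Idn C (Tgt C f)"
  by (simp add: is_inverse_def hom_def)

lemma iso_inv: "iso C f \<Longrightarrow> is_inverse C f (inv_arr C f)"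
  unfolding iso_def inv_arr_def by (metis someI)

lemma inverse_unique: "category C \<Longrightarrow> f \<in> Arr C \<Longrightarrow> is_inverse C f g \<Longrightarrow> is_inverse C f g' \<Longrightarrow> g = g'"
proof -
  assume c: "category C" and f: "f \<in> Arr C" and i1: "is_inverse C f g" and i2: "is_inverse C f g'"
  note a = is_inverseD[OF i1] is_inverseD[OF i2]
  have "g = Cmp C g (Cmp C f g')" using a c f by simp
  also have "\<dots> = Cmp C (Cmp C g f) g'" by (rule sym, rule cat_assoc) (use a c f in auto)
  also have "\<dots> = g'" using a c f by simp
  finally show ?thesis .
qed

lemma inv_arr_eq: "category C \<Longrightarrow> f \<in> Arr C \<Longrightarrow> is_inverse C f g \<Longrightarrow> inv_arr C f = g"
  by (meson inverse_unique iso_def iso_inv)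

lemma iso_inv_arr[simp]: "iso C f \<Longrightarrow> inv_arr C f \<in> Arr C"
  and iso_inv_src[simp]: "iso C f \<Longrightarrow> Src C (inv_arr C f) = Tgt C f"
  and iso_inv_tgt[simp]: "iso C f \<Longrightarrow> Tgt C (inv_arr C f) = Src C f"
  and iso_inv_l[simp]: "iso C f \<Longrightarrow> Cmp C (inv_arr C f) f = Idn C (Src C f)"
  and iso_inv_r[simp]: "iso C f \<Longrightarrow> Cmp C f (inv_arr C f) = Idn C (Tgt C f)"
  using is_inverseD[OF iso_inv[of C f]] by auto

lemma iso_arr[simp]: "iso C f \<Longrightarrow> f \<in> Arr C" by (simp add: iso_def)

lemma iso_cancel_l[simp]: "category C \<Longrightarrow> iso C f \<Longrightarrow> x \<in> Arr C \<Longrightarrow> Tgt C x = Src C f \<Longrightarrow>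
    Cmp C (inv_arr C f) (Cmp C f x) = x"
  and iso_cancel_l2[simp]: "category C \<Longrightarrow> iso C f \<Longrightarrow> x \<in> Arr C \<Longrightarrow> Tgt C x = Tgt C f \<Longrightarrow>
    Cmp C f (Cmp C (inv_arr C f) x) = x"
proof -
  assume c: "category C" "iso C f" "x \<in> Arr C"
  { assume t: "Tgt C x = Src C f"
    have "Cmp C (inv_arr C f) (Cmp C f x) = Cmp C (Cmp C (inv_arr C f) f) x"
      using c t by (simp del: iso_inv_l)
    then show "Cmp C (inv_arr C f) (Cmp C f x) = x" using c t by simp }
  { assume t: "Tgt C x = Tgt C f"
    have "Cmp C f (Cmp C (inv_arr C f) x) = Cmp C (Cmp C f (inv_arr C f)) x"
      using c t by (simp del: iso_inv_r)
    then show "Cmp C f (Cmp C (inv_arr C f) x) = x" using c t by simp }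
qed

lemma is_inverse_sym: "is_inverse C f g \<Longrightarrow> f \<in> Arr C \<Longrightarrow> is_inverse C g f"
  by (auto simp: is_inverse_def hom_def)

lemma iso_inv_iso[simp]: "iso C f \<Longrightarrow> iso C (inv_arr C f)"
  using is_inverse_sym iso_def iso_inv by fastforce

lemma inv_inv[simp]: "category C \<Longrightarrow> iso C f \<Longrightarrow> inv_arr C (inv_arr C f) = f"
  by (meson inv_arr_eq is_inverse_sym iso_arr iso_inv iso_inv_arr)

lemma is_inverse_idn: "category C \<Longrightarrow> a \<in> Obj C \<Longrightarrow> is_inverse C (Idn C a) (Idn C a)"
  by (simp add: is_inverse_def hom_def)

lemma iso_idn[simp]: "category C \<Longrightarrow> a \<in> Obj C \<Longrightarrow> iso C (Idn C a)"
  using is_inverse_idn iso_def by fastforce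

lemma inv_idn[simp]: "category C \<Longrightarrow> a \<in> Obj C \<Longrightarrow> inv_arr C (Idn C a) = Idn C a"
  by (simp add: inv_arr_eq is_inverse_idn)

lemma is_inverse_cmp: "category C \<Longrightarrow> iso C f \<Longrightarrow> iso C g \<Longrightarrow> Tgt C f = Src C g \<Longrightarrow>
   is_inverse C (Cmp C g f) (Cmp C (inv_arr C f) (inv_arr C g))"
proof -
  assume c: "category C" "iso C f" "iso C g" "Tgt C f = Src C g"
  have 1: "Cmp C (Cmp C (inv_arr C f) (inv_arr C g)) (Cmp C g f) = Idn C (Src C f)"
    using c by simp
  have 2: "Cmp C (Cmp C g f) (Cmp C (inv_arr C f) (inv_arr C g)) = Idn C (Tgt C g)"
    using c by simp
  show ?thesis using 1 2 c by (simp add: is_inverse_def hom_def)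
qed

lemma iso_cmp[simp]: "category C \<Longrightarrow> iso C f \<Longrightarrow> iso C g \<Longrightarrow> Tgt C f = Src C g \<Longrightarrow> iso C (Cmp C g f)"
  using is_inverse_cmp iso_def by (metis cat_cmp iso_arr)

lemma inv_cmp[simp]: "category C \<Longrightarrow> iso C f \<Longrightarrow> iso C g \<Longrightarrow> Tgt C f = Src C g \<Longrightarrow>
  inv_arr C (Cmp C g f) = Cmp C (inv_arr C f) (inv_arr C g)"
  by (simp add: inv_arr_eq is_inverse_cmp)


lemma fun_cat1: "is_functor C D Fo Fm \<Longrightarrow> category C"
  and fun_cat2: "is_functor C D Fo Fm \<Longrightarrow> category D"
  by (simp_all add: is_functor_def)

lemma fun_obj: "is_functor C D Fo Fm \<Longrightarrow> a \<in> Obj C \<Longrightarrow> Fo a \<in> Obj D"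
  and fun_arr: "is_functor C D Fo Fm \<Longrightarrow> f \<in> Arr C \<Longrightarrow> Fm f \<in> Arr D"
  and fun_src: "is_functor C D Fo Fm \<Longrightarrow> f \<in> Arr C \<Longrightarrow> Src D (Fm f) = Fo (Src C f)"
  and fun_tgt: "is_functor C D Fo Fm \<Longrightarrow> f \<in> Arr C \<Longrightarrow> Tgt D (Fm f) = Fo (Tgt C f)"
  and fun_idn: "is_functor C D Fo Fm \<Longrightarrow> a \<in> Obj C \<Longrightarrow> Fm (Idn C a) = Idn D (Fo a)"
  and fun_cmp: "is_functor C D Fo Fm \<Longrightarrow> f \<in> Arr C \<Longrightarrow> g \<in> Arr C \<Longrightarrow> Tgt C f = Src C g \<Longrightarrow>
     Fm (Cmp C g f) = Cmp D (Fm g) (Fm f)"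
  by (simp_all add: is_functor_def hom_def)

lemma fun_inverse: "is_functor C D Fo Fm \<Longrightarrow> f \<in> Arr C \<Longrightarrow> is_inverse C f g \<Longrightarrow> is_inverse D (Fm f) (Fm g)"
proof -
  assume F: "is_functor C D Fo Fm" and f: "f \<in> Arr C" and i: "is_inverse C f g"
  note a = is_inverseD[OF i]
  have c: "category C" using F by (rule fun_cat1)
  have 1: "Cmp D (Fm g) (Fm f) = Idn D (Src D (Fm f))"
  proof -
    have "Cmp D (Fm g) (Fm f) = Fm (Cmp C g f)" by (rule fun_cmp[OF F, symmetric]) (use a f in auto)
    also have "\<dots> = Fm (Idn C (Src C f))" using a by simp
    also have "\<dots> = Idn D (Fo (Src C f))" using c f by (simp add: fun_idn[OF F])
    finally show ?thesis using f by (simp add: fun_src[OF F])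
  qed
  have 2: "Cmp D (Fm f) (Fm g) = Idn D (Tgt D (Fm f))"
  proof -
    have "Cmp D (Fm f) (Fm g) = Fm (Cmp C f g)" by (rule fun_cmp[OF F, symmetric]) (use a f in auto)
    also have "\<dots> = Fm (Idn C (Tgt C f))" using a by simp
    also have "\<dots> = Idn D (Fo (Tgt C f))" using c f by (simp add: fun_idn[OF F])
    finally show ?thesis using f by (simp add: fun_tgt[OF F])
  qed
  have 3: "Fm g \<in> hom D (Tgt D (Fm f)) (Src D (Fm f))"
    using a f by (simp add: hom_iff fun_arr[OF F] fun_src[OF F] fun_tgt[OF F])
  show ?thesis using 1 2 3 by (simp add: is_inverse_def)
qed

lemma fun_iso: "is_functor C D Fo Fm \<Longrightarrow> iso C f \<Longrightarrow> iso D (Fm f)"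
proof -
  assume F: "is_functor C D Fo Fm" and i: "iso C f"
  then obtain g where "is_inverse C f g" "f \<in> Arr C" by (auto simp: iso_def)
  then show ?thesis unfolding iso_def using fun_arr[OF F] fun_inverse[OF F] by blast
qed

lemma fun_inv: "is_functor C D Fo Fm \<Longrightarrow> iso C f \<Longrightarrow> inv_arr D (Fm f) = Fm (inv_arr C f)"
  by (rule inv_arr_eq) (auto intro: fun_cat2 fun_arr fun_inverse iso_inv)

lemma is_inverse_op[simp]: "is_inverse (op C) f g = is_inverse C f g"
  by (auto simp: is_inverse_def hom_def)

lemma iso_op[simp]: "iso (op C) f = iso C f"
  by (simp add: iso_def)

lemma inv_arr_op[simp]: "inv_arr (op C) f = inv_arr C f"
  by (simp add: inv_arr_def)

lemma cofun_arr[simp]: "is_functor C (op C) Fo Fm \<Longrightarrow> f \<in> Arr C \<Longrightarrow> Fm f \<in> Arr C"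
  and cofun_src[simp]: "is_functor C (op C) Fo Fm \<Longrightarrow> f \<in> Arr C \<Longrightarrow> Src C (Fm f) = Fo (Tgt C f)"
  and cofun_tgt[simp]: "is_functor C (op C) Fo Fm \<Longrightarrow> f \<in> Arr C \<Longrightarrow> Tgt C (Fm f) = Fo (Src C f)"
  and cofun_idn[simp]: "is_functor C (op C) Fo Fm \<Longrightarrow> a \<in> Obj C \<Longrightarrow> Fm (Idn C a) = Idn C (Fo a)"
  and cofun_cmp[simp]: "is_functor C (op C) Fo Fm \<Longrightarrow> f \<in> Arr C \<Longrightarrow> g \<in> Arr C \<Longrightarrow> Tgt C f = Src C g \<Longrightarrow>
     Fm (Cmp C g f) = Cmp C (Fm f) (Fm g)"
  by (simp_all add: is_functor_def hom_def)

lemma cofun_iso[simp]: "is_functor C (op C) Fo Fm \<Longrightarrow> iso C f \<Longrightarrow> iso C (Fm f)"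
  using fun_iso[of C "op C" Fo Fm f] by simp

lemma cofun_inv: "is_functor C (op C) Fo Fm \<Longrightarrow> iso C f \<Longrightarrow> inv_arr C (Fm f) = Fm (inv_arr C f)"
  using fun_inv[of C "op C" Fo Fm f] by simp

lemma id_functor: "category C \<Longrightarrow> is_functor C C id id"
  by (simp add: is_functor_def hom_def)

lemma comp_functor: "is_functor A B F1 F2 \<Longrightarrow> is_functor B C G1 G2 \<Longrightarrow> is_functor A C (G1 \<circ> F1) (G2 \<circ> F2)"
proof -
  assume F: "is_functor A B F1 F2" and G: "is_functor B C G1 G2"
  have 1: "\<forall>f\<in>Arr A. \<forall>g\<in>Arr A. Tgt A f = Src A g \<longrightarrow>
      (G2 \<circ> F2) (Cmp A g f) = Cmp C ((G2 \<circ> F2) g) ((G2 \<circ> F2) f)"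
  proof (intro ballI impI)
    fix f g assume f: "f \<in> Arr A" and g: "g \<in> Arr A" and t: "Tgt A f = Src A g"
    have "F2 (Cmp A g f) = Cmp B (F2 g) (F2 f)" using fun_cmp[OF F f g t] .
    moreover have "Tgt B (F2 f) = Src B (F2 g)" using fun_src[OF F g] fun_tgt[OF F f] t by simp
    ultimately show "(G2 \<circ> F2) (Cmp A g f) = Cmp C ((G2 \<circ> F2) g) ((G2 \<circ> F2) f)"
      using fun_cmp[OF G fun_arr[OF F f] fun_arr[OF F g]] fun_arr[OF F f] by simp
  qed
  have 2: "\<forall>a\<in>Obj A. (G2 \<circ> F2) (Idn A a) = Idn C ((G1 \<circ> F1) a)"
    using fun_idn[OF F] fun_idn[OF G] fun_obj[OF F] by simp
  have 3: "\<forall>f\<in>Arr A. (G2 \<circ> F2) f \<in> hom C ((G1 \<circ> F1) (Src A f)) ((G1 \<circ> F1) (Tgt A f))"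
    using fun_arr[OF F] fun_arr[OF G] fun_src[OF F] fun_src[OF G] fun_tgt[OF F] fun_tgt[OF G]
    by (simp add: hom_iff)
  have 4: "\<forall>a\<in>Obj A. (G1 \<circ> F1) a \<in> Obj C" using fun_obj[OF F] fun_obj[OF G] by simp
  show ?thesis unfolding is_functor_def using 1 2 3 4 fun_cat1[OF F] fun_cat2[OF G] by blast
qed

lemma cofun_inv_rev[simp]: "is_functor C (op C) Fo Fm \<Longrightarrow> iso C f \<Longrightarrow> Fm (inv_arr C f) = inv_arr C (Fm f)"
  using cofun_inv by metis

lemma dag_functor: "dagger_cat D dag \<Longrightarrow> is_functor D (op D) id dag"
  and dag_cat: "dagger_cat D dag \<Longrightarrow> category D"
  and dag_dag[simp]: "dagger_cat D dag \<Longrightarrow> f \<in> Arr D \<Longrightarrow> dag (dag f) = f"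
  unfolding dagger_cat_def is_functor_def by blast+

lemma Herm_simps[simp]:
  "Obj (Herm C do dm \<eta>) = herm_obj C do dm \<eta>"
  "((x, f, y) \<in> Arr (Herm C do dm \<eta>)) = (x \<in> herm_obj C do dm \<eta> \<and> y \<in> herm_obj C do dm \<eta> \<and> f \<in> hom C (fst x) (fst y))"
  "Src (Herm C do dm \<eta>) (x, f, y) = x"
  "Tgt (Herm C do dm \<eta>) (x, f, y) = y"
  "Idn (Herm C do dm \<eta>) x = (x, Idn C (fst x), x)"
  "Cmp (Herm C do dm \<eta>) (y, g, z) (x, f, y') = (x, Cmp C g f, z)"
  by (simp_all add: Herm_def)

lemma herm_obj_iff[simp]: "((c, h) \<in> herm_obj C do dm \<eta>) =
   (c \<in> Obj C \<and> h \<in> hom C c (do c) \<and> iso C h \<and> Cmp C (dm h) (\<eta> c) = h)"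
  by (simp add: herm_obj_def)

lemma herm_dag_simp[simp]: "herm_dag C dm (x, f, y) = (y, Cmp C (inv_arr C (snd x)) (Cmp C (dm f) (snd y)), x)"
  by (simp add: herm_dag_def)

lemma herm_obj_fst: "x \<in> herm_obj C do dm \<eta> \<Longrightarrow> fst x \<in> Obj C"
  by (cases x) simp

lemma Herm_category: "category C \<Longrightarrow> category (Herm C do dm \<eta>)"
  unfolding category_def[of "Herm C do dm \<eta>"]
  apply (intro conjI ballI impI)
  apply (auto simp: hom_iff herm_obj_fst)
  done

lemma Herm_is_inverse: "category C \<Longrightarrow> (x, f, y) \<in> Arr (Herm C do dm \<eta>) \<Longrightarrow> is_inverse C f k \<Longrightarrow>
   is_inverse (Herm C do dm \<eta>) (x, f, y) (y, k, x)"
  by (auto simp: is_inverse_def hom_iff)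

lemma Herm_iso: "category C \<Longrightarrow> (x, f, y) \<in> Arr (Herm C do dm \<eta>) \<Longrightarrow> iso C f \<Longrightarrow>
   iso (Herm C do dm \<eta>) (x, f, y)"
  using Herm_is_inverse iso_def iso_inv by metis

lemma Herm_inv: "category C \<Longrightarrow> (x, f, y) \<in> Arr (Herm C do dm \<eta>) \<Longrightarrow> iso C f \<Longrightarrow>
   inv_arr (Herm C do dm \<eta>) (x, f, y) = (y, inv_arr C f, x)"
  by (meson Herm_category Herm_is_inverse inv_arr_eq iso_inv)

lemma Herm_iso_D: "iso (Herm C do dm \<eta>) (x, f, y) \<Longrightarrow> iso C f"
proof -
  assume "iso (Herm C do dm \<eta>) (x, f, y)"
  then obtain g where g: "is_inverse (Herm C do dm \<eta>) (x, f, y) g" and a: "(x, f, y) \<in> Arr (Herm C do dm \<eta>)"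
    by (auto simp: iso_def)
  obtain y' k x' where gg: "g = (y', k, x')" by (cases g) auto
  have "is_inverse C f k" using g a unfolding gg by (auto simp: is_inverse_def hom_iff)
  then show ?thesis using a by (auto simp: iso_def hom_iff)
qed


section \<open>Unitaries and minimality\<close>

lemma unitary_idn: "dagger_cat D dag \<Longrightarrow> a \<in> Obj D \<Longrightarrow> unitary D dag (Idn D a)"
  using dag_cat[of D dag] dag_functor[of D dag] by (simp add: unitary_def)

lemma unitary_inv: "dagger_cat D dag \<Longrightarrow> unitary D dag u \<Longrightarrow> unitary D dag (inv_arr D u)"
  using dag_cat[of D dag] dag_functor[of D dag] by (simp add: unitary_def)

lemma unitary_cmp: "dagger_cat D dag \<Longrightarrow> unitary D dag u \<Longrightarrow> unitary D dag v \<Longrightarrow> Tgt D u = Src D v \<Longrightarrow>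
   unitary D dag (Cmp D v u)"
  using dag_cat[of D dag] dag_functor[of D dag] by (simp add: unitary_def)

lemma unitary_rel_equiv: "dagger_cat D dag \<Longrightarrow> equiv (Obj D) (unitary_rel D dag)"
proof -
  assume d: "dagger_cat D dag"
  note c = dag_cat[OF d]
  show ?thesis
  proof (rule equivI)
    show "unitary_rel D dag \<subseteq> Obj D \<times> Obj D" by (auto simp: unitary_rel_def)
    show "refl_on (Obj D) (unitary_rel D dag)"
    proof (rule refl_onI)
      fix x assume "x \<in> Obj D"
      then show "(x, x) \<in> unitary_rel D dag"
        by (auto simp: unitary_rel_def hom_iff c intro!: bexI[of _ "Idn D x"] unitary_idn[OF d])
    qed
    show "sym (unitary_rel D dag)"
    proof (rule symI)
      fix a b assume "(a, b) \<in> unitary_rel D dag"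
      then obtain u where "u \<in> hom D a b" "unitary D dag u" "a \<in> Obj D" "b \<in> Obj D"
        by (auto simp: unitary_rel_def)
      then show "(b, a) \<in> unitary_rel D dag"
        using unitary_inv[OF d] by (auto simp: unitary_rel_def hom_iff unitary_def intro!: bexI[of _ "inv_arr D u"])
    qed
    show "trans (unitary_rel D dag)"
    proof (rule transI)
      fix a b e assume "(a, b) \<in> unitary_rel D dag" "(b, e) \<in> unitary_rel D dag"
      then obtain u v where "u \<in> hom D a b" "unitary D dag u" "v \<in> hom D b e" "unitary D dag v"
        "a \<in> Obj D" "e \<in> Obj D"
        by (auto simp: unitary_rel_def)
      then show "(a, e) \<in> unitary_rel D dag"
        using unitary_cmp[OF d, of u v] c
        by (auto simp: unitary_rel_def hom_iff unitary_def intro!: bexI[of _ "Cmp D v u"])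
    qed
  qed
qed

lemma iso_rel_equiv: "category D \<Longrightarrow> equiv (Obj D) (isomorphic_rel D)"
proof -
  assume c: "category D"
  show ?thesis
  proof (rule equivI)
    show "isomorphic_rel D \<subseteq> Obj D \<times> Obj D" by (auto simp: isomorphic_rel_def)
    show "refl_on (Obj D) (isomorphic_rel D)"
    proof (rule refl_onI)
      fix x assume "x \<in> Obj D"
      then show "(x, x) \<in> isomorphic_rel D"
        by (auto simp: isomorphic_rel_def hom_iff c intro!: bexI[of _ "Idn D x"])
    qed
    show "sym (isomorphic_rel D)"
    proof (rule symI)
      fix a b assume "(a, b) \<in> isomorphic_rel D"
      then obtain u where "u \<in> hom D a b" "iso D u" "a \<in> Obj D" "b \<in> Obj D"
        by (auto simp: isomorphic_rel_def)
      then show "(b, a) \<in> isomorphic_rel D"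
        by (auto simp: isomorphic_rel_def hom_iff intro!: bexI[of _ "inv_arr D u"])
    qed
    show "trans (isomorphic_rel D)"
    proof (rule transI)
      fix a b e assume "(a, b) \<in> isomorphic_rel D" "(b, e) \<in> isomorphic_rel D"
      then obtain u v where "u \<in> hom D a b" "iso D u" "v \<in> hom D b e" "iso D v"
        "a \<in> Obj D" "e \<in> Obj D"
        by (auto simp: isomorphic_rel_def)
      then show "(a, e) \<in> isomorphic_rel D"
        using c by (auto simp: isomorphic_rel_def hom_iff intro!: bexI[of _ "Cmp D v u"])
    qed
  qed
qed

lemma unitary_sub_iso: "unitary_rel D dag \<subseteq> isomorphic_rel D"
  by (auto simp: unitary_rel_def isomorphic_rel_def unitary_def)

lemma image_class: "dagger_cat D dag \<Longrightarrow> a \<in> Obj D \<Longrightarrow>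
   isomorphic_rel D `` (unitary_rel D dag `` {a}) = isomorphic_rel D `` {a}"
proof -
  assume d: "dagger_cat D dag" and a: "a \<in> Obj D"
  note eI = iso_rel_equiv[OF dag_cat[OF d]] and eU = unitary_rel_equiv[OF d]
  show ?thesis
  proof
    show "isomorphic_rel D `` (unitary_rel D dag `` {a}) \<subseteq> isomorphic_rel D `` {a}"
      using unitary_sub_iso[of D dag] eI unfolding equiv_def trans_def by blast
    show "isomorphic_rel D `` {a} \<subseteq> isomorphic_rel D `` (unitary_rel D dag `` {a})"
      using eU a unfolding equiv_def refl_on_def by blast
  qed
qed

lemma minimal_iff: "dagger_cat D dag \<Longrightarrow>
  minimal D dag \<longleftrightarrow> (\<forall>a b. (a, b) \<in> isomorphic_rel D \<longrightarrow> (a, b) \<in> unitary_rel D dag)"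
proof -
  assume d: "dagger_cat D dag"
  note eI = iso_rel_equiv[OF dag_cat[OF d]] and eU = unitary_rel_equiv[OF d]
  let ?phi = "\<lambda>X. isomorphic_rel D `` X"
  have surj: "?phi ` (Obj D // unitary_rel D dag) = Obj D // isomorphic_rel D"
    using image_class[OF d] by (auto simp: quotient_def)
  have inj_iff: "inj_on ?phi (Obj D // unitary_rel D dag) \<longleftrightarrow>
      (\<forall>a b. (a, b) \<in> isomorphic_rel D \<longrightarrow> (a, b) \<in> unitary_rel D dag)"
  proof
    assume inj: "inj_on ?phi (Obj D // unitary_rel D dag)"
    show "\<forall>a b. (a, b) \<in> isomorphic_rel D \<longrightarrow> (a, b) \<in> unitary_rel D dag"
    proof (intro allI impI)
      fix a b assume ab: "(a, b) \<in> isomorphic_rel D"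
      then have a: "a \<in> Obj D" and b: "b \<in> Obj D" by (auto simp: isomorphic_rel_def)
      have "?phi (unitary_rel D dag `` {a}) = ?phi (unitary_rel D dag `` {b})"
        using image_class[OF d a] image_class[OF d b] eq_equiv_class_iff[OF eI a b] ab by simp
      moreover have "unitary_rel D dag `` {a} \<in> Obj D // unitary_rel D dag"
        "unitary_rel D dag `` {b} \<in> Obj D // unitary_rel D dag" using a b by (auto intro: quotientI)
      ultimately have "unitary_rel D dag `` {a} = unitary_rel D dag `` {b}"
        using inj by (meson inj_onD)
      then show "(a, b) \<in> unitary_rel D dag" using eq_equiv_class_iff[OF eU a b] by simp
    qed
  next
    assume H: "\<forall>a b. (a, b) \<in> isomorphic_rel D \<longrightarrow> (a, b) \<in> unitary_rel D dag"
    show "inj_on ?phi (Obj D // unitary_rel D dag)"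
    proof (rule inj_onI)
      fix X Y assume X: "X \<in> Obj D // unitary_rel D dag" and Y: "Y \<in> Obj D // unitary_rel D dag"
        and e: "?phi X = ?phi Y"
      obtain a where a: "a \<in> Obj D" "X = unitary_rel D dag `` {a}" using X by (auto elim: quotientE)
      obtain b where b: "b \<in> Obj D" "Y = unitary_rel D dag `` {b}" using Y by (auto elim: quotientE)
      have "isomorphic_rel D `` {a} = isomorphic_rel D `` {b}"
        using e a b image_class[OF d] by simp
      then have "(a, b) \<in> isomorphic_rel D" using eq_equiv_class_iff[OF eI a(1) b(1)] by simp
      then have "(a, b) \<in> unitary_rel D dag" using H by blast
      then show "X = Y" using a b eq_equiv_class_iff[OF eU a(1) b(1)] by simp
    qed
  qed
  show ?thesis unfolding minimal_def bij_betw_def using surj inj_iff by blast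
qed


lemma part2: "dagger_cat D dag \<Longrightarrow>
  (\<forall>a b. (a, b) \<in> isomorphic_rel D \<longrightarrow> (a, b) \<in> unitary_rel D dag) \<longleftrightarrow>
  (\<forall>f. iso_positive D dag f \<longrightarrow> aut_positive D dag f)"
proof -
  assume d: "dagger_cat D dag"
  note c = dag_cat[OF d] and F = dag_functor[OF d]
  note eU = unitary_rel_equiv[OF d]
  show ?thesis
  proof
    assume H: "\<forall>a b. (a, b) \<in> isomorphic_rel D \<longrightarrow> (a, b) \<in> unitary_rel D dag"
    show "\<forall>f. iso_positive D dag f \<longrightarrow> aut_positive D dag f"
    proof (intro allI impI)
      fix f assume "iso_positive D dag f"
      then obtain g where f: "f \<in> Arr D" "Src D f = Tgt D f" and g: "iso D g" "Src D g = Src D f"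
        and fg: "f = Cmp D (dag g) g" by (auto simp: iso_positive_def)
      have "(Src D g, Tgt D g) \<in> isomorphic_rel D"
        using g c cat_src[OF c iso_arr[OF g(1)]] by (auto simp: isomorphic_rel_def hom_iff)
      then have "(Tgt D g, Src D g) \<in> unitary_rel D dag"
        using H eU unfolding equiv_def sym_def by blast
      then obtain u where u: "u \<in> hom D (Tgt D g) (Src D g)" "unitary D dag u"
        by (auto simp: unitary_rel_def)
      have ui: "iso D u" and ud: "dag u = inv_arr D u" using u by (auto simp: unitary_def)
      have uA: "u \<in> Arr D" "Src D u = Tgt D g" "Tgt D u = Src D g" using u by (auto simp: hom_iff)
      define k where "k = Cmp D u g"
      have k: "automorphism D k" "Src D k = Src D f"
        using ui uA g c by (auto simp: k_def automorphism_def)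
      have "Cmp D (dag k) k = Cmp D (Cmp D (dag g) (inv_arr D u)) (Cmp D u g)"
        using ui uA g c F ud by (simp add: k_def)
      also have "\<dots> = Cmp D (dag g) g"
        using ui uA g c F by simp
      finally have "f = Cmp D (dag k) k" using fg by simp
      then show "aut_positive D dag f" using f k by (auto simp: aut_positive_def)
    qed
  next
    assume H: "\<forall>f. iso_positive D dag f \<longrightarrow> aut_positive D dag f"
    show "\<forall>a b. (a, b) \<in> isomorphic_rel D \<longrightarrow> (a, b) \<in> unitary_rel D dag"
    proof (intro allI impI)
      fix a b assume ab: "(a, b) \<in> isomorphic_rel D"
      then obtain g where g: "iso D g" "Src D g = a" "Tgt D g = b" and a: "a \<in> Obj D" and b: "b \<in> Obj D"
        by (auto simp: isomorphic_rel_def hom_iff)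
      have "iso_positive D dag (Cmp D (dag g) g)"
        using g c F by (auto simp: iso_positive_def)
      then have "aut_positive D dag (Cmp D (dag g) g)" using H by blast
      then obtain k where k: "iso D k" "Src D k = a" "Tgt D k = a" and gk: "Cmp D (dag g) g = Cmp D (dag k) k"
        using g c F by (auto simp: aut_positive_def automorphism_def)
      have e: "dag g = Cmp D (dag k) (Cmp D k (inv_arr D g))"
      proof -
        have "dag g = Cmp D (Cmp D (dag g) g) (inv_arr D g)" using g c F by simp
        also have "\<dots> = Cmp D (Cmp D (dag k) k) (inv_arr D g)" using gk by simp
        also have "\<dots> = Cmp D (dag k) (Cmp D k (inv_arr D g))" using g k c F by simp
        finally show ?thesis .
      qed
      define u where "u = Cmp D g (inv_arr D k)"
      have ui: "iso D u" "Src D u = a" "Tgt D u = b" using g k c by (auto simp: u_def)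
      have "dag u = Cmp D (inv_arr D (dag k)) (dag g)" using g k c F by (simp add: u_def)
      also have "\<dots> = Cmp D k (inv_arr D g)" unfolding e using g k c F by simp
      also have "\<dots> = inv_arr D u" using g k c by (simp add: u_def)
      finally have "unitary D dag u" using ui by (simp add: unitary_def)
      then show "(a, b) \<in> unitary_rel D dag" using ui a b by (auto simp: unitary_rel_def hom_iff)
    qed
  qed
qed


section \<open>Maximal implies positivity\<close>

lemma nt_comp: "nat_trans C D Fo Fm Go Gm \<alpha> \<Longrightarrow> a \<in> Obj C \<Longrightarrow> \<alpha> a \<in> hom D (Fo a) (Go a)"
  and nt_nat: "nat_trans C D Fo Fm Go Gm \<alpha> \<Longrightarrow> f \<in> Arr C \<Longrightarrow>
     Cmp D (\<alpha> (Tgt C f)) (Fm f) = Cmp D (Gm f) (\<alpha> (Src C f))"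
  by (simp_all add: nat_trans_def)

lemma part1a:
  assumes d: "dagger_cat D dag" and hm: "herm_model D dag C do dm \<eta>"
    and sa: "self_adjoint D dag f" and au: "automorphism D f"
  shows "iso_positive D dag f"
proof -
  note cD = dag_cat[OF d] and FD = dag_functor[OF d]
  have ai: "anti_involutive C do dm \<eta>" and de: "dagger_equivalent D dag (Herm C do dm \<eta>) (herm_dag C dm)"
    using hm by (auto simp: herm_model_def)
  have cC: "category C" and Fd: "is_functor C (op C) do dm" and nt: "nat_trans C C id id (do \<circ> do) (dm \<circ> dm) \<eta>"
    using ai by (auto simp: anti_involutive_def)
  let ?E = "Herm C do dm \<eta>" and ?dE = "herm_dag C dm"
  have cE: "category ?E" using Herm_category[OF cC] .
  obtain Fo Fm Go Gm \<eta>' where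
    Fd1: "dagger_functor D dag ?E ?dE Fo Fm" and Gd1: "dagger_functor ?E ?dE D dag Go Gm" and
    nt1: "nat_trans D D id id (Go \<circ> Fo) (Gm \<circ> Fm) \<eta>'" and un: "\<forall>a\<in>Obj D. unitary D dag (\<eta>' a)"
    using de unfolding dagger_equivalent_def by blast
  have F: "is_functor D ?E Fo Fm" and Fdag: "\<forall>f\<in>Arr D. Fm (dag f) = ?dE (Fm f)"
    using Fd1 by (auto simp: dagger_functor_def)
  have G: "is_functor ?E D Go Gm" and Gdag: "\<forall>f\<in>Arr ?E. Gm (?dE f) = dag (Gm f)"
    using Gd1 by (auto simp: dagger_functor_def)
  have fA: "f \<in> Arr D" and fd: "dag f = f" and fi: "iso D f" and fst: "Src D f = Tgt D f"
    using sa au by (auto simp: self_adjoint_def automorphism_def)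
  define a where "a = Src D f"
  have aO: "a \<in> Obj D" using cD fA by (simp add: a_def)
  have FfA: "Fm f \<in> Arr ?E" and FfS: "Src ?E (Fm f) = Fo a" and FfT: "Tgt ?E (Fm f) = Fo a"
    using fun_arr[OF F fA] fun_src[OF F fA] fun_tgt[OF F fA] fst by (auto simp: a_def)
  obtain x f0 y where Ff: "Fm f = (x, f0, y)" by (cases "Fm f") auto
  have xa: "x = Fo a" and ya: "y = Fo a" using FfS FfT Ff by auto
  have xA: "(x, f0, x) \<in> Arr ?E" using FfA Ff ya xa by simp
  obtain c h where xch: "x = (c, h)" by (cases x) auto
  have cO: "c \<in> Obj C" and hh: "h \<in> hom C c (do c)" and hi: "iso C h" and hd: "Cmp C (dm h) (\<eta> c) = h"
    using xA xch by auto
  have f0: "f0 \<in> Arr C" "Src C f0 = c" "Tgt C f0 = c" using xA xch by (auto simp: hom_iff)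
  have hA: "h \<in> Arr C" "Src C h = c" "Tgt C h = do c" using hh by (auto simp: hom_iff)
  have f0i: "iso C f0" using fun_iso[OF F fi] Ff Herm_iso_D by metis
  have "Fm f = ?dE (Fm f)" using Fdag fA fd by metis
  moreover have Ffc: "Fm f = ((c, h), f0, (c, h))" using Ff xa ya xch by simp
  ultimately have f0e: "f0 = Cmp C (inv_arr C h) (Cmp C (dm f0) h)" by simp
  have hf: "Cmp C h f0 = Cmp C (dm f0) h"
  proof -
    have "Cmp C h f0 = Cmp C h (Cmp C (inv_arr C h) (Cmp C (dm f0) h))" using f0e by metis
    also have "\<dots> = Cmp C (dm f0) h"
      using cC hi hA f0 Fd by simp
    finally show ?thesis .
  qed
  have etac: "\<eta> c \<in> Arr C" "Src C (\<eta> c) = c" "Tgt C (\<eta> c) = do (do c)"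
    using nt_comp[OF nt cO] by (auto simp: hom_iff)
  define h' where "h' = Cmp C h f0"
  have x'O: "(c, h') \<in> herm_obj C do dm \<eta>"
  proof -
    have "Cmp C (dm h') (\<eta> c) = Cmp C (dm f0) (Cmp C (dm h) (\<eta> c))"
      using cC hA f0 Fd etac by (simp add: h'_def)
    also have "\<dots> = h'" using hd hf by (simp add: h'_def)
    finally show ?thesis using cO cC hA f0 hi f0i by (simp add: h'_def hom_iff)
  qed
  define x' where "x' = (c, h')"
  define g where "g = (x, Idn C c, x')"
  have gA: "g \<in> Arr ?E" using xA x'O cC cO xch by (simp add: g_def x'_def hom_iff)
  have gi: "iso ?E g" using Herm_iso[OF cC] gA cC cO by (simp add: g_def)
  have dg: "?dE g = (x', f0, x)"
    using cC cO Fd hA hi f0 by (simp add: g_def x'_def xch h'_def)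
  have dgA: "?dE g \<in> Arr ?E" using xA x'O f0 by (simp add: dg x'_def xch hom_iff)
  have gg: "Cmp ?E (?dE g) g = Fm f"
  proof -
    have "Cmp ?E (?dE g) g = Cmp ?E (x', f0, x) (x, Idn C c, x')" unfolding dg by (simp only: g_def)
    also have "\<dots> = (x, f0, x)" using cC cO f0 by simp
    finally show ?thesis using Ff xa ya by simp
  qed
  have GFf: "Gm (Fm f) = Cmp D (dag (Gm g)) (Gm g)"
  proof -
    have "Gm (Fm f) = Gm (Cmp ?E (?dE g) g)" using gg by simp
    also have "\<dots> = Cmp D (Gm (?dE g)) (Gm g)"
      by (rule fun_cmp[OF G gA dgA]) (simp add: g_def dg)
    also have "\<dots> = Cmp D (dag (Gm g)) (Gm g)" using Gdag gA by simp
    finally show ?thesis .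
  qed
  have Ggi: "iso D (Gm g)" using fun_iso[OF G gi] .
  have GgS: "Src D (Gm g) = Go (Fo a)" using fun_src[OF G gA] by (simp add: g_def xa)
  have et: "\<eta>' a \<in> Arr D" "Src D (\<eta>' a) = a" "Tgt D (\<eta>' a) = Go (Fo a)"
    using nt_comp[OF nt1 aO] by (auto simp: hom_iff)
  have eti: "iso D (\<eta>' a)" and etd: "dag (\<eta>' a) = inv_arr D (\<eta>' a)"
    using un aO by (auto simp: unitary_def)
  have nat: "Cmp D (\<eta>' a) f = Cmp D (Gm (Fm f)) (\<eta>' a)"
    using nt_nat[OF nt1 fA] fst by (simp add: a_def)
  define k where "k = Cmp D (Gm g) (\<eta>' a)"
  have ki: "iso D k" "Src D k = Src D f" using cD Ggi eti et GgS by (auto simp: k_def a_def)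
  have "Cmp D (dag k) k = Cmp D (inv_arr D (\<eta>' a)) (Cmp D (Cmp D (dag (Gm g)) (Gm g)) (\<eta>' a))"
    using cD FD Ggi eti et GgS etd by (simp add: k_def)
  also have "\<dots> = Cmp D (inv_arr D (\<eta>' a)) (Cmp D (\<eta>' a) f)" using GFf nat by simp
  also have "\<dots> = f" using cD eti et fA fst by (simp add: a_def)
  finally show ?thesis using fA fst ki unfolding iso_positive_def by metis
qed


section \<open>Positivity implies maximal\<close>

lemma functor_cong: "is_functor C D Fo Fm \<Longrightarrow> (\<And>f. f \<in> Arr C \<Longrightarrow> Fm' f = Fm f) \<Longrightarrow>
   (\<And>a. a \<in> Obj C \<Longrightarrow> Fo' a = Fo a) \<Longrightarrow> is_functor C D Fo' Fm'"
proof -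
  assume F: "is_functor C D Fo Fm" and e1: "\<And>f. f \<in> Arr C \<Longrightarrow> Fm' f = Fm f"
    and e2: "\<And>a. a \<in> Obj C \<Longrightarrow> Fo' a = Fo a"
  note c = fun_cat1[OF F]
  show ?thesis unfolding is_functor_def
    using c fun_cat2[OF F] fun_obj[OF F] fun_arr[OF F] fun_src[OF F] fun_tgt[OF F] fun_idn[OF F] fun_cmp[OF F]
      e1 e2 by (auto simp: hom_iff)
qed

lemma herm_obj_elim: "x \<in> herm_obj D id dag (Idn D) \<Longrightarrow> dagger_cat D dag \<Longrightarrow>
   fst x \<in> Obj D \<and> snd x \<in> Arr D \<and> Src D (snd x) = fst x \<and> Tgt D (snd x) = fst x \<and> iso D (snd x) \<and>
   dag (snd x) = snd x"
proof -
  assume x: "x \<in> herm_obj D id dag (Idn D)" and d: "dagger_cat D dag"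
  obtain c h where xch: "x = (c, h)" by (cases x) auto
  have "c \<in> Obj D" "h \<in> Arr D" "Src D h = c" "Tgt D h = c" "iso D h" "Cmp D (dag h) (Idn D c) = h"
    using x xch by (auto simp: hom_iff)
  moreover then have "dag h = h" using dag_cat[OF d] dag_functor[OF d] by simp
  ultimately show ?thesis using xch by simp
qed

lemma part1b:
  assumes d: "dagger_cat D dag"
    and H: "\<forall>f. self_adjoint D dag f \<and> automorphism D f \<longrightarrow> iso_positive D dag f"
  shows "herm_model D dag D id dag (Idn D)"
proof -
  note cD = dag_cat[OF d] and FD = dag_functor[OF d]
  have ai: "anti_involutive D id dag (Idn D)"
  proof -
    have f1: "is_functor D D (id \<circ> id) (dag \<circ> dag)"
      by (rule functor_cong[OF id_functor[OF cD]]) (use d in auto)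
    have nt: "nat_trans D D id id (id \<circ> id) (dag \<circ> dag) (Idn D)"
      unfolding nat_trans_def using id_functor[OF cD] f1 cD d by (auto simp: hom_iff)
    show ?thesis unfolding anti_involutive_def using cD FD nt by simp
  qed
  let ?E = "Herm D id dag (Idn D)" and ?dE = "herm_dag D dag"
  let ?HO = "herm_obj D id dag (Idn D)"
  have cE: "category ?E" using Herm_category[OF cD] .
  define gsel where "gsel x = (if snd x = Idn D (fst x) then Idn D (fst x)
     else (SOME g. iso D g \<and> Src D g = fst x \<and> snd x = Cmp D (dag g) g))" for x
  have gsel: "iso D (gsel x) \<and> Src D (gsel x) = fst x \<and> snd x = Cmp D (dag (gsel x)) (gsel x)"
    if x: "x \<in> ?HO" for x
  proof (cases "snd x = Idn D (fst x)")
    case True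
    then show ?thesis using herm_obj_elim[OF x d] cD FD by (simp add: gsel_def)
  next
    case False
    note e = herm_obj_elim[OF x d]
    have "self_adjoint D dag (snd x) \<and> automorphism D (snd x)"
      using e by (simp add: self_adjoint_def automorphism_def)
    then have "iso_positive D dag (snd x)" using H by blast
    then have "\<exists>g. iso D g \<and> Src D g = fst x \<and> snd x = Cmp D (dag g) g"
      using e by (auto simp: iso_positive_def)
    from someI_ex[OF this] show ?thesis using False unfolding gsel_def by simp
  qed
  have gI: "iso D (gsel x)" and gS: "Src D (gsel x) = fst x"
    and gH: "snd x = Cmp D (dag (gsel x)) (gsel x)" if "x \<in> ?HO" for x
    using gsel[OF that] by auto
  have gidn: "gsel (a, Idn D a) = Idn D a" for a by (simp add: gsel_def)
  define Fo where "Fo a = (a, Idn D a)" for a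
  define Fm where "Fm f = ((Src D f, Idn D (Src D f)), f, (Tgt D f, Idn D (Tgt D f)))" for f
  define Go where "Go x = Tgt D (gsel x)" for x
  define Gm where "Gm = (\<lambda>(x, f, y). Cmp D (gsel y) (Cmp D f (inv_arr D (gsel x))))"
  define \<epsilon> where "\<epsilon> x = ((Go x, Idn D (Go x)), inv_arr D (gsel x), x)" for x
  have FoO: "Fo a \<in> ?HO" if "a \<in> Obj D" for a using that cD FD by (simp add: Fo_def hom_iff)
  have GoO: "Go x \<in> Obj D" if "x \<in> ?HO" for x using gI[OF that] cD by (simp add: Go_def)
  have GoFo: "Go (Fo a) = a" if "a \<in> Obj D" for a using that cD by (simp add: Go_def Fo_def gidn)
  have GmFm: "Gm (Fm f) = f" if "f \<in> Arr D" for f using that cD by (simp add: Gm_def Fm_def gidn)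
  have F: "is_functor D ?E Fo Fm"
    unfolding is_functor_def
  proof (intro conjI ballI impI)
    show "category D" "category ?E" by (fact cD, fact cE)
    show "Fo a \<in> Obj ?E" if "a \<in> Obj D" for a using FoO[OF that] by simp
    show "Fm f \<in> hom ?E (Fo (Src D f)) (Fo (Tgt D f))" if "f \<in> Arr D" for f
      using that cD FD FoO by (simp add: Fm_def Fo_def hom_iff)
    show "Fm (Idn D a) = Idn ?E (Fo a)" if "a \<in> Obj D" for a
      using that cD by (simp add: Fm_def Fo_def)
    show "Fm (Cmp D g f) = Cmp ?E (Fm g) (Fm f)" if "f \<in> Arr D" "g \<in> Arr D" "Tgt D f = Src D g" for f g
      using that cD by (simp add: Fm_def)
  qed
  have Fdag: "Fm (dag f) = ?dE (Fm f)" if "f \<in> Arr D" for f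
    using that cD FD by (simp add: Fm_def)
  have GmA: "Gm (x, f, y) \<in> Arr D \<and> Src D (Gm (x, f, y)) = Go x \<and> Tgt D (Gm (x, f, y)) = Go y"
    if "(x, f, y) \<in> Arr ?E" for x f y
  proof -
    have "x \<in> ?HO" "y \<in> ?HO" "f \<in> Arr D" "Src D f = fst x" "Tgt D f = fst y" using that by (auto simp: hom_iff)
    then show ?thesis using gI gS cD by (simp add: Gm_def Go_def)
  qed
  have G: "is_functor ?E D Go Gm"
    unfolding is_functor_def
  proof (intro conjI ballI impI)
    show "category D" "category ?E" by (fact cD, fact cE)
    show "Go x \<in> Obj D" if "x \<in> Obj ?E" for x using GoO that by simp
    show "Gm e \<in> hom D (Go (Src ?E e)) (Go (Tgt ?E e))" if "e \<in> Arr ?E" for e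
      using that GmA by (cases e) (auto simp: hom_iff)
    show "Gm (Idn ?E x) = Idn D (Go x)" if "x \<in> Obj ?E" for x
      using that gI gS cD by (simp add: Gm_def Go_def)
    show "Gm (Cmp ?E g f) = Cmp D (Gm g) (Gm f)"
      if "f \<in> Arr ?E" "g \<in> Arr ?E" "Tgt ?E f = Src ?E g" for f g
    proof -
      obtain x f1 y where f: "f = (x, f1, y)" by (cases f) auto
      obtain y' f2 z where g: "g = (y', f2, z)" by (cases g) auto
      have yy: "y' = y" using that f g by simp
      have "x \<in> ?HO" "y \<in> ?HO" "z \<in> ?HO" "f1 \<in> Arr D" "f2 \<in> Arr D" "Src D f1 = fst x" "Tgt D f1 = fst y"
        "Src D f2 = fst y" "Tgt D f2 = fst z" using that f g yy by (auto simp: hom_iff)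
      then show ?thesis using gI gS cD by (simp add: Gm_def f g yy)
    qed
  qed
  have Gdag: "Gm (?dE e) = dag (Gm e)" if "e \<in> Arr ?E" for e
  proof -
    obtain x f y where e: "e = (x, f, y)" by (cases e) auto
    have x: "x \<in> ?HO" and y: "y \<in> ?HO" and f: "f \<in> Arr D" "Src D f = fst x" "Tgt D f = fst y"
      using that e by (auto simp: hom_iff)
    note gx = gI[OF x] gS[OF x] gH[OF x] and gy = gI[OF y] gS[OF y] gH[OF y]
    have "Gm (?dE e) = Cmp D (gsel x) (Cmp D (Cmp D (inv_arr D (Cmp D (dag (gsel x)) (gsel x)))
        (Cmp D (dag f) (Cmp D (dag (gsel y)) (gsel y)))) (inv_arr D (gsel y)))"
      using gx gy by (simp add: e Gm_def)
    also have "\<dots> = Cmp D (inv_arr D (dag (gsel x))) (Cmp D (dag f) (dag (gsel y)))"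
      using gx gy f cD FD by simp
    also have "\<dots> = dag (Gm e)"
      using gx gy f cD FD by (simp add: e Gm_def)
    finally show ?thesis .
  qed
  have nt1: "nat_trans D D id id (Go \<circ> Fo) (Gm \<circ> Fm) (Idn D)"
  proof -
    have f1: "is_functor D D (Go \<circ> Fo) (Gm \<circ> Fm)" using comp_functor[OF F G] .
    show ?thesis unfolding nat_trans_def using id_functor[OF cD] f1 cD GoFo GmFm
      by (auto simp: hom_iff)
  qed
  have un1: "\<forall>a\<in>Obj D. unitary D dag (Idn D a)"
    using cD FD by (simp add: unitary_def)
  have nt2: "nat_trans ?E ?E (Fo \<circ> Go) (Fm \<circ> Gm) id id \<epsilon>"
    unfolding nat_trans_def
  proof (intro conjI ballI)
    show "is_functor ?E ?E (Fo \<circ> Go) (Fm \<circ> Gm)" using comp_functor[OF G F] .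
    show "is_functor ?E ?E id id" using id_functor[OF cE] .
    show "\<epsilon> x \<in> hom ?E ((Fo \<circ> Go) x) (id x)" if "x \<in> Obj ?E" for x
      using that FoO[OF GoO] gI gS cD by (simp add: \<epsilon>_def Fo_def Go_def hom_iff)
    show "Cmp ?E (\<epsilon> (Tgt ?E e)) ((Fm \<circ> Gm) e) = Cmp ?E (id e) (\<epsilon> (Src ?E e))" if "e \<in> Arr ?E" for e
    proof -
      obtain x f y where e: "e = (x, f, y)" by (cases e) auto
      have x: "x \<in> ?HO" and y: "y \<in> ?HO" and f: "f \<in> Arr D" "Src D f = fst x" "Tgt D f = fst y"
        using that e by (auto simp: hom_iff)
      note gm = GmA[OF that[unfolded e]]
      show ?thesis using gm gI[OF x] gS[OF x] gI[OF y] gS[OF y] f cD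
        by (simp add: e \<epsilon>_def Fm_def Gm_def Go_def)
    qed
  qed
  have un2: "\<forall>x\<in>Obj ?E. unitary ?E ?dE (\<epsilon> x)"
  proof
    fix x assume "x \<in> Obj ?E"
    then have x: "x \<in> ?HO" by simp
    note gx = gI[OF x] gS[OF x] gH[OF x]
    have eA: "\<epsilon> x \<in> Arr ?E" using FoO[OF GoO[OF x]] x gx cD by (simp add: \<epsilon>_def Fo_def Go_def hom_iff)
    have ei: "iso ?E (\<epsilon> x)" using Herm_iso[OF cD] eA gx by (simp add: \<epsilon>_def)
    have einv: "inv_arr ?E (\<epsilon> x) = (x, gsel x, (Go x, Idn D (Go x)))"
      using Herm_inv[OF cD] eA gx cD by (simp add: \<epsilon>_def)
    have "?dE (\<epsilon> x) = (x, Cmp D (dag (inv_arr D (gsel x))) (snd x), (Go x, Idn D (Go x)))"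
      using cD FD gx GoO[OF x] by (simp add: \<epsilon>_def Go_def)
    also have "\<dots> = (x, gsel x, (Go x, Idn D (Go x)))"
    proof -
      have "Cmp D (dag (inv_arr D (gsel x))) (snd x) = Cmp D (inv_arr D (dag (gsel x))) (Cmp D (dag (gsel x)) (gsel x))"
        using gx cD FD by simp
      also have "\<dots> = gsel x" using gx cD FD by simp
      finally show ?thesis by simp
    qed
    finally show "unitary ?E ?dE (\<epsilon> x)" using ei einv by (simp add: unitary_def)
  qed
  have "dagger_equivalent D dag ?E ?dE"
    unfolding dagger_equivalent_def dagger_functor_def
    using F Fdag G Gdag nt1 un1 nt2 un2 by blast
  then show ?thesis using ai by (simp add: herm_model_def)
qed


theorem mainTheorem10:
  fixes D :: "('o, 'm) cat" and dag :: "'m \<Rightarrow> 'm"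
  assumes "dagger_cat D dag"
  shows
    "((\<forall>(C :: ('c, 'n) cat) do dm \<eta>. herm_model D dag C do dm \<eta> \<longrightarrow>
         (\<forall>f. self_adjoint D dag f \<and> automorphism D f \<longrightarrow> iso_positive D dag f)) \<and>
      ((\<forall>f. self_adjoint D dag f \<and> automorphism D f \<longrightarrow> iso_positive D dag f) \<longrightarrow>
         (\<exists>(C :: ('o, 'm) cat) do dm \<eta>. herm_model D dag C do dm \<eta>)))
     \<and>
     (minimal D dag \<longleftrightarrow> (\<forall>f. iso_positive D dag f \<longrightarrow> aut_positive D dag f))"
proof -
  have 1: "\<forall>(C :: ('c, 'n) cat) do dm \<eta>. herm_model D dag C do dm \<eta> \<longrightarrow>
         (\<forall>f. self_adjoint D dag f \<and> automorphism D f \<longrightarrow> iso_positive D dag f)"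
    using part1a[OF assms] by blast
  have 2: "(\<forall>f. self_adjoint D dag f \<and> automorphism D f \<longrightarrow> iso_positive D dag f) \<longrightarrow>
         (\<exists>(C :: ('o, 'm) cat) do dm \<eta>. herm_model D dag C do dm \<eta>)"
    using part1b[OF assms] by blast
  have 3: "minimal D dag \<longleftrightarrow> (\<forall>f. iso_positive D dag f \<longrightarrow> aut_positive D dag f)"
    using minimal_iff[OF assms] part2[OF assms] by simp
  show ?thesis using 1 2 3 by blast
qed

end
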